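(* Let $\varepsilon>0$, $q\ge0$ an integer, and $s\in\{s^+,s^-\}$. With the notation of the context, define for $n\in\{4q,\dots,4q+3\}$ and $j\in\{1,\dots,4\}$: $r^j_n=X^j_\varepsilon(n\varepsilon)$, $p^j_n=m\,\frac{r^j_{n+1}-r^j_n}{\varepsilon}$, $\widetilde r_n=\widetilde X_\varepsilon(n\varepsilon)$, $\widetilde p_n=m\,\frac{\widetilde r_{n+1}-\widetilde r_n}{\varepsilon}$, and the average angular momentum $$\sigma=\frac1{16}\sum_{n=4q}^{4q+3}\sum_{j=1}^4 r^j_n\wedge p^j_n .$$ Then $$\sigma=\frac14\sum_{n=4q}^{4q+3}\widetilde r_n\wedge\widetilde p_n+s_z,\qquad\text{where } s_z=-\frac{\hbar}{2}\ \text{if } s=s^+,\quad s_z=+\frac{\hbar}{2}\ \text{if } s=s^- .$$ That is, the extended particle has intrinsic angular momentum $\mp\hbar/2$, independently of $\varepsilon$.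
   Context: Fix constants $\hbar>0$, $m>0$. In $\mathbb{R}^2$ let $u^1=(1,1)$, $u^2=(1,-1)$, $u^3=(-1,-1)$, $u^4=(-1,1)$. Let $s^+$ be the cyclic permutation $u^1\mapsto u^2\mapsto u^3\mapsto u^4\mapsto u^1$ and $s^-=(s^+)^{-1}$; $s^k$ denotes the $k$-th iterate. For $\varepsilon>0$ put $\gamma=(1+i)\sqrt{\hbar\varepsilon/(4m)}$. Given a continuous $\mathcal{V}:[0,\infty)\to\mathbb{C}^2$ and $Z_0\in\mathbb{C}^2$, define $Z^j_\varepsilon(0)=Z_0$ and for $n\ge1$, $n=4q+r$ ($0\le r\le3$): $Z^j_\varepsilon(n\varepsilon)=Z^j_\varepsilon((n-1)\varepsilon)+\mathcal{V}(4q\varepsilon)\varepsilon+\gamma(s^nu^j-s^{n-1}u^j)$, $j=1,\dots,4$. Define also $\widetilde Z_\varepsilon(0)=Z_0$, $\widetilde Z_\varepsilon(n\varepsilon)=\widetilde Z_\varepsilon((n-1)\varepsilon)+\mathcal{V}(4q\varepsilon)\varepsilon$ (the "center of gravity" process). Set $X^j_\varepsilon=\operatorname{Re}Z^j_\varepsilon$ and $\widetilde X_\varepsilon=\operatorname{Re}\widetilde Z_\varepsilon$ (componentwise real parts, in $\mathbb{R}^2$). For $a=(a_x,a_y),b=(b_x,b_y)\in\mathbb{R}^2$, $a\wedge b=a_xb_y-a_yb_x$. *)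

theory Defs
  imports "HOL-Analysis.Analysis"
begin

definition wedge :: "real \<times> real \<Rightarrow> real \<times> real \<Rightarrow> real" where
  "wedge a b = fst a * snd b - snd a * fst b"

fun u :: "nat \<Rightarrow> real \<times> real" where
  "u (Suc 0) = (1, 1)"
| "u (Suc (Suc 0)) = (1, -1)"
| "u (Suc (Suc (Suc 0))) = (-1, -1)"
| "u (Suc (Suc (Suc (Suc 0)))) = (-1, 1)"
| "u _ = (0, 0)"

definition splus :: "real \<times> real \<Rightarrow> real \<times> real" where
  "splus v = (if v = u 1 then u 2 else if v = u 2 then u 3 else
              if v = u 3 then u 4 else if v = u 4 then u 1 else v)"

definition sminus :: "real \<times> real \<Rightarrow> real \<times> real" where
  "sminus v = (if v = u 2 then u 1 else if v = u 3 then u 2 else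
               if v = u 4 then u 3 else if v = u 1 then u 4 else v)"

definition cvec :: "real \<times> real \<Rightarrow> complex \<times> complex" where
  "cvec v = (complex_of_real (fst v), complex_of_real (snd v))"

definition cscale :: "complex \<Rightarrow> complex \<times> complex \<Rightarrow> complex \<times> complex" where
  "cscale c z = (c * fst z, c * snd z)"

definition reV :: "complex \<times> complex \<Rightarrow> real \<times> real" where
  "reV z = (Re (fst z), Re (snd z))"

definition gamma :: "real \<Rightarrow> real \<Rightarrow> real \<Rightarrow> complex" where
  "gamma hbar m eps = (1 + \<i>) * complex_of_real (sqrt (hbar * eps / (4 * m)))"

text \<open>Zproc ... j n is Z^j_eps(n eps); step n (n \<ge> 1, n = 4q + r) uses V(4 q eps).\<close>
primrec Zproc :: "real \<Rightarrow> real \<Rightarrow> real \<Rightarrow> (real \<Rightarrow> complex \<times> complex) \<Rightarrow> complex \<times> complex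
    \<Rightarrow> (real \<times> real \<Rightarrow> real \<times> real) \<Rightarrow> nat \<Rightarrow> nat \<Rightarrow> complex \<times> complex" where
  "Zproc hbar m eps V Z0 s j 0 = Z0"
| "Zproc hbar m eps V Z0 s j (Suc n) =
     Zproc hbar m eps V Z0 s j n + cscale (complex_of_real eps) (V (real (4 * (Suc n div 4)) * eps))
     + cscale (gamma hbar m eps) (cvec ((s ^^ Suc n) (u j) - (s ^^ n) (u j)))"

text \<open>Ztil ... n is the center of gravity process at time n eps.\<close>
primrec Ztil :: "real \<Rightarrow> (real \<Rightarrow> complex \<times> complex) \<Rightarrow> complex \<times> complex \<Rightarrow> nat \<Rightarrow> complex \<times> complex" where
  "Ztil eps V Z0 0 = Z0"
| "Ztil eps V Z0 (Suc n) = Ztil eps V Z0 n + cscale (complex_of_real eps) (V (real (4 * (Suc n div 4)) * eps))"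

definition Xproc where
  "Xproc hbar m eps V Z0 s j n = reV (Zproc hbar m eps V Z0 s j n)"

definition Xtil where
  "Xtil eps V Z0 n = reV (Ztil eps V Z0 n)"

end

theory Submission
  imports Defs
begin

lemma u_vals: "u 1 = (1,1)" "u 2 = (1,-1)" "u 3 = (-1,-1)" "u 4 = (-1,1)"
  by (simp_all add: numeral_eq_Suc)

lemma sp: "splus (1,1) = (1,-1)" "splus (1,-1) = (-1,-1)" "splus (-1,-1) = (-1,1)" "splus (-1,1) = (1,1)"
  by (simp_all add: splus_def u_vals)
lemma sm: "sminus (1,1) = (-1,1)" "sminus (1,-1) = (1,1)" "sminus (-1,-1) = (1,-1)" "sminus (-1,1) = (-1,-1)"
  by (simp_all add: sminus_def u_vals)

lemma reV_add: "reV (a+b) = reV a + reV b" by (simp add: reV_def)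

lemma reV_gamma: "reV (cscale (gamma hbar m eps) (cvec w)) = sqrt (hbar*eps/(4*m)) *\<^sub>R w"
  by (simp add: reV_def cscale_def gamma_def cvec_def prod_eq_iff)

lemma X_eq: "Xproc hbar m eps V Z0 s j n = Xtil eps V Z0 n + sqrt (hbar*eps/(4*m)) *\<^sub>R ((s^^n)(u j) - u j)"
proof (induction n)
  case 0 then show ?case by (simp add: Xproc_def Xtil_def)
next
  case (Suc n)
  then show ?case by (simp add: Xproc_def Xtil_def reV_add reV_gamma algebra_simps)
qed

lemma s4: assumes "s \<in> {splus, sminus}" shows "(s^^4) (u j) = u j"
proof -
  have "j \<in> {1,2,3,4} \<or> u j = (0,0)"
    by (cases j rule: u.cases) auto
  moreover have "splus (0,0) = (0,0)" "sminus (0,0) = (0,0)"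
    by (auto simp: splus_def sminus_def u_vals)
  ultimately show ?thesis using assms
    by (auto simp: numeral_eq_Suc u_vals sp sm simp del: funpow.simps(2) simp add: funpow_Suc_right)
qed

lemma s4q: assumes "s \<in> {splus, sminus}" shows "(s^^(4*q+r)) (u j) = (s^^r) (u j)"
proof -
  have "(s^^(4*q)) (u j) = u j"
  proof (induction q)
    case (Suc q)
    have "s^^(4*Suc q) = s^^4 o s^^(4*q)" by (simp add: funpow_add[symmetric])
    then show ?case using Suc s4[OF assms] by simp
  qed simp
  then show ?thesis by (simp add: funpow_add add.commute[of "4*q"])
qed

lemma sum4: "(\<Sum>n\<in>{4*q..4*q+3}. f n) = f (4*q) + f (4*q+1) + f (4*q+2) + f (4*q+3)" for f :: "nat \<Rightarrow> real"
proof -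
  have "{4*q..4*q+3} = {4*q, 4*q+1, 4*q+2, 4*q+3}" by auto
  then show ?thesis by simp
qed
lemma sumj: "(\<Sum>j\<in>{1..4::nat}. f j) = f 1 + f 2 + f 3 + f 4" for f :: "nat \<Rightarrow> real"
proof -
  have "{1..4::nat} = {1,2,3,4}" by auto
  then show ?thesis by simp
qed


lemma per_n:
  fixes A B :: "real \<times> real" and a b :: "nat \<Rightarrow> real \<times> real"
  assumes "(\<Sum>j\<in>{1..4::nat}. a j) = 0" "(\<Sum>j\<in>{1..4::nat}. b j) = 0"
  shows "(\<Sum>j\<in>{1..4::nat}. wedge (A + c *\<^sub>R a j) (k *\<^sub>R ((B + c *\<^sub>R b j) - (A + c *\<^sub>R a j))))
    = 4 * wedge A (k *\<^sub>R (B - A)) + c*c*k * (\<Sum>j\<in>{1..4::nat}. wedge (a j) (b j - a j))"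
proof -
  have "{1..4::nat} = {1,2,3,4}" by auto
  then have S: "\<And>f::nat \<Rightarrow> real \<times> real. (\<Sum>j\<in>{1..4::nat}. f j) = f 1 + f 2 + f 3 + f 4" by simp
  have a: "fst (a 1) + fst (a 2) + fst (a 3) + fst (a 4) = 0" "snd (a 1) + snd (a 2) + snd (a 3) + snd (a 4) = 0"
    using assms(1) unfolding S by (simp_all add: prod_eq_iff)
  have b: "fst (b 1) + fst (b 2) + fst (b 3) + fst (b 4) = 0" "snd (b 1) + snd (b 2) + snd (b 3) + snd (b 4) = 0"
    using assms(2) unfolding S by (simp_all add: prod_eq_iff)
  show ?thesis unfolding sumj wedge_def
    by (simp only: fst_add snd_add fst_diff snd_diff fst_scaleR snd_scaleR real_scaleR_def) (use a b in algebra)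
qed

lemma fp: "(f^^1) x = f x" "(f^^2) x = f (f x)" "(f^^3) x = f (f (f x))" "(f^^4) x = f (f (f (f x)))"
  by (simp_all add: numeral_eq_Suc)

lemma sumr: "(\<Sum>n\<in>{4*q..4*q+3}. f n) = (\<Sum>r<4. f (4*q+r))" for f :: "nat \<Rightarrow> real"
proof -
  have "{..<4::nat} = {0,1,2,3}" by auto
  then show ?thesis unfolding sum4 by simp
qed

lemma sumr4: "(\<Sum>r<4. f r) = f 0 + f 1 + f 2 + f 3" for f :: "nat \<Rightarrow> 'z::comm_monoid_add"
proof -
  have "{..<4::nat} = {0,1,2,3}" by auto
  then show ?thesis by (simp add: add.assoc)
qed

lemma sumj': "(\<Sum>j\<in>{1..4::nat}. f j) = f 1 + f 2 + f 3 + f 4" for f :: "nat \<Rightarrow> 'z::comm_monoid_add"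
proof -
  have "{1..4::nat} = {1,2,3,4}" by auto
  then show ?thesis by (simp add: add.assoc)
qed

lemma asum: assumes "s \<in> {splus, sminus}" "r \<le> 4"
  shows "(\<Sum>j\<in>{1..4::nat}. (s^^r) (u j) - u j) = 0"
proof -
  have "r \<in> {0,1,2,3,4}" using assms(2) by auto
  then show ?thesis using assms(1) unfolding sumj'
    by (auto simp: fp u_vals sp sm zero_prod_def)
qed

lemma Tsum: assumes "s \<in> {splus, sminus}"
  shows "(\<Sum>r<4. \<Sum>j\<in>{1..4::nat}. wedge ((s^^r) (u j) - u j) (((s^^(r+1)) (u j) - u j) - ((s^^r) (u j) - u j)))
     = (if s = splus then -32 else 32)"
  using assms unfolding sumr4 sumj'
  by (auto simp: fp u_vals sp sm wedge_def)

theorem theorem2: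
  fixes hbar m eps :: real and q :: nat
    and V :: "real \<Rightarrow> complex \<times> complex" and Z0 :: "complex \<times> complex"
    and s :: "real \<times> real \<Rightarrow> real \<times> real"
  assumes "hbar > 0" and "m > 0" and "eps > 0"
    and "continuous_on {0..} V"
    and "s \<in> {splus, sminus}"
  shows "(1/16) * (\<Sum>n\<in>{4*q..4*q+3}. \<Sum>j\<in>{1..4::nat}.
            wedge (Xproc hbar m eps V Z0 s j n)
                  ((m / eps) *\<^sub>R (Xproc hbar m eps V Z0 s j (n+1) - Xproc hbar m eps V Z0 s j n)))
       = (1/4) * (\<Sum>n\<in>{4*q..4*q+3}.
            wedge (Xtil eps V Z0 n) ((m / eps) *\<^sub>R (Xtil eps V Z0 (n+1) - Xtil eps V Z0 n)))
         + (if s = splus then - hbar / 2 else hbar / 2)"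
proof -
  define c where "c = sqrt (hbar*eps/(4*m))"
  define k where "k = m / eps"
  have cck: "c*c*k = hbar/4"
  proof -
    have "c*c = hbar*eps/(4*m)" unfolding c_def using assms by (simp add: real_sqrt_mult_self)
    then show ?thesis unfolding k_def using assms by simp
  qed
  define a where "a r j = (s^^r) (u j) - u j" for r j
  define x where "x r = Xtil eps V Z0 (4*q+r)" for r
  have L: "Xproc hbar m eps V Z0 s j (4*q+r) = x r + c *\<^sub>R a r j" for r j
    unfolding X_eq x_def c_def a_def s4q[OF assms(5)] ..
  have W: "wedge (Xproc hbar m eps V Z0 s j (4*q+r))
                  ((m / eps) *\<^sub>R (Xproc hbar m eps V Z0 s j (4*q+r+1) - Xproc hbar m eps V Z0 s j (4*q+r)))
        = wedge (x r + c *\<^sub>R a r j) (k *\<^sub>R ((x (r+1) + c *\<^sub>R a (r+1) j) - (x r + c *\<^sub>R a r j)))" for r j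
    using L[of j r] L[of j "r+1"] by (simp add: k_def add.assoc)
  have Wt: "wedge (Xtil eps V Z0 (4*q+r)) ((m / eps) *\<^sub>R (Xtil eps V Z0 (4*q+r+1) - Xtil eps V Z0 (4*q+r)))
     = wedge (x r) (k *\<^sub>R (x (r+1) - x r))" for r
    by (simp add: x_def k_def add.assoc)
  have P: "(\<Sum>j\<in>{1..4::nat}. wedge (x r + c *\<^sub>R a r j) (k *\<^sub>R ((x (r+1) + c *\<^sub>R a (r+1) j) - (x r + c *\<^sub>R a r j))))
      = 4 * wedge (x r) (k *\<^sub>R (x (r+1) - x r)) + c*c*k * (\<Sum>j\<in>{1..4::nat}. wedge (a r j) (a (r+1) j - a r j))"
    if "r < 4" for r
    proof (rule per_n)
    show "(\<Sum>j\<in>{1..4::nat}. a r j) = 0" unfolding a_def using that asum[OF assms(5), of r] by simp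
    show "(\<Sum>j\<in>{1..4::nat}. a (r+1) j) = 0" unfolding a_def using that asum[OF assms(5), of "r+1"] by (simp only: Suc_leI add.commute[of r 1] One_nat_def plus_1_eq_Suc)
  qed
  have LHS: "(\<Sum>n\<in>{4*q..4*q+3}. \<Sum>j\<in>{1..4::nat}.
            wedge (Xproc hbar m eps V Z0 s j n)
                  ((m / eps) *\<^sub>R (Xproc hbar m eps V Z0 s j (n+1) - Xproc hbar m eps V Z0 s j n)))
     = (\<Sum>r<4. 4 * wedge (x r) (k *\<^sub>R (x (r+1) - x r)) + c*c*k * (\<Sum>j\<in>{1..4::nat}. wedge (a r j) (a (r+1) j - a r j)))"
    unfolding sumr W using P by simp
  have RHS: "(\<Sum>n\<in>{4*q..4*q+3}.
            wedge (Xtil eps V Z0 n) ((m / eps) *\<^sub>R (Xtil eps V Z0 (n+1) - Xtil eps V Z0 n)))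
     = (\<Sum>r<4. wedge (x r) (k *\<^sub>R (x (r+1) - x r)))"
    unfolding sumr Wt ..
  have T: "(\<Sum>r<4. \<Sum>j\<in>{1..4::nat}. wedge (a r j) (a (r+1) j - a r j)) = (if s = splus then -32 else 32)"
    unfolding a_def using Tsum[OF assms(5)] .
  show ?thesis
    unfolding LHS RHS sum.distrib sum_distrib_left[symmetric] T cck
    by (simp add: sum_distrib_left[symmetric])
qed

end
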